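(* Let $n\ge 1$ and $d\ge 0$. For every polynomial $p\in\mathbb{R}[x]_d$, $x\in\mathbb{R}^n$, $$\|p\|_{\mathbb{R}[x]}\le 3^{d+1}\,\|p\|_{C([-1,1]^n)}.$$
   Context: $\mathbb{R}[x]_d$ is the space of real polynomials in $x\in\mathbb{R}^n$ of total degree at most $d$. For $p(x)=\sum_{|\alpha|\le d}\beta_\alpha x^\alpha$ (multi-indices $\alpha\in\mathbb{N}^n$, $|\alpha|=\sum_i\alpha_i$), $\|p\|_{\mathbb{R}[x]}:=\max_\alpha |\beta_\alpha|/\binom{|\alpha|}{\alpha}$ with $\binom{|\alpha|}{\alpha}=\frac{|\alpha|!}{\alpha_1!\cdots\alpha_n!}$. $\|p\|_{C(S)}=\max_{x\in S}|p(x)|$. *)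

theory Defs
  imports "HOL-Analysis.Analysis"
begin

text \<open>Multivariate polynomials in x in R^n are represented explicitly by their
coefficient family beta indexed by multi-indices alpha :: 'n => nat
(the dimension n = CARD('n) >= 1).\<close>

definition multi_indices :: "nat \<Rightarrow> ('n::finite \<Rightarrow> nat) set" where
  "multi_indices d = {\<alpha>. (\<Sum>i\<in>UNIV. \<alpha> i) \<le> d}"

definition mi_abs :: "('n::finite \<Rightarrow> nat) \<Rightarrow> nat" where
  "mi_abs \<alpha> = (\<Sum>i\<in>UNIV. \<alpha> i)"

definition multinomial_coeff :: "('n::finite \<Rightarrow> nat) \<Rightarrow> real" where
  "multinomial_coeff \<alpha> = fact (mi_abs \<alpha>) / (\<Prod>i\<in>UNIV. fact (\<alpha> i))"

definition mpoly_eval :: "nat \<Rightarrow> (('n::finite \<Rightarrow> nat) \<Rightarrow> real) \<Rightarrow> real^'n \<Rightarrow> real" where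
  "mpoly_eval d \<beta> x = (\<Sum>\<alpha>\<in>multi_indices d. \<beta> \<alpha> * (\<Prod>i\<in>UNIV. (x $ i) ^ \<alpha> i))"

definition coeff_norm :: "nat \<Rightarrow> (('n::finite \<Rightarrow> nat) \<Rightarrow> real) \<Rightarrow> real" where
  "coeff_norm d \<beta> = Max ((\<lambda>\<alpha>. \<bar>\<beta> \<alpha>\<bar> / multinomial_coeff \<alpha>) ` multi_indices d)"

definition unit_cube :: "(real^'n::finite) set" where
  "unit_cube = {x. \<forall>i. - 1 \<le> x $ i \<and> x $ i \<le> 1}"

definition cube_sup_norm :: "nat \<Rightarrow> (('n::finite \<Rightarrow> nat) \<Rightarrow> real) \<Rightarrow> real" where
  "cube_sup_norm d \<beta> = (SUP x\<in>unit_cube. \<bar>mpoly_eval d \<beta> x\<bar>)"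

end

theory Submission imports Defs "HOL-Complex_Analysis.Complex_Analysis" "HOL-Library.FuncSet"
begin

lemma fact_prod_le:
  assumes "finite A"
  shows "(\<Prod>i\<in>A. fact (f i)) \<le> (fact (\<Sum>i\<in>A. f i) :: nat)"
  using assms
proof (induction A rule: finite_induct)
  case empty then show ?case by simp
next
  case (insert x A)
  have "fact (f x) * fact (sum f A) \<le> (fact (f x + sum f A) :: nat)"
  proof -
    have "fact (f x) * fact (f x + sum f A - f x) * ((f x + sum f A) choose f x) = (fact (f x + sum f A)::nat)"
      by (rule binomial_fact_lemma) simp
    moreover have "((f x + sum f A) choose f x) \<ge> 1"
      using zero_less_binomial[of "f x" "f x + sum f A"] by linarith
    ultimately show ?thesis
      by (metis add_diff_cancel_left' le_add1 mult_le_mono2 nat_mult_1_right mult.assoc)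
  qed
  moreover have "fact (f x) * (\<Prod>i\<in>A. fact (f i)) \<le> fact (f x) * (fact (sum f A) :: nat)"
    using insert by simp
  ultimately have "fact (f x) * (\<Prod>i\<in>A. fact (f i)) \<le> (fact (f x + sum f A) :: nat)"
    by (rule order_trans[rotated])
  then show ?case using insert by simp
qed

lemma multinomial_ge1: "multinomial_coeff (\<alpha>::'n::finite \<Rightarrow> nat) \<ge> 1"
proof -
  have "real (\<Prod>i\<in>UNIV. fact (\<alpha> i)) \<le> real (fact (mi_abs \<alpha>))"
    unfolding mi_abs_def using fact_prod_le[of UNIV \<alpha>] by (simp only: of_nat_le_iff) simp
  moreover have "(0::real) < (\<Prod>i\<in>UNIV. fact (\<alpha> i))" by (simp add: prod_pos)
  ultimately show ?thesis unfolding multinomial_coeff_def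
    by (simp add: of_nat_prod)
qed

lemma roots_orth:
  fixes N g a :: nat
  assumes "g < N" "a < N"
  shows "(\<Sum>m<N. (cis (2*pi/N))^(m*g) * (cnj (cis (2*pi/N)))^(m*a)) = (if g = a then of_nat N else 0)"
proof -
  define x where "x = cis (2*pi*(real g - real a)/N)"
  have eq: "(cis (2*pi/N))^(m*g) * (cnj (cis (2*pi/N)))^(m*a) = x ^ m" for m
  proof -
    have "(cis (2*pi/N))^(m*g) * (cnj (cis (2*pi/N)))^(m*a) = cis (real (m*g) * (2*pi/N)) * cis (real (m*a) * (-(2*pi/N)))"
      by (simp only: Complex.DeMoivre cis_cnj)
    also have "\<dots> = cis (real (m*g) * (2*pi/N) + real (m*a) * (-(2*pi/N)))" by (simp add: cis_mult)
    also have "\<dots> = cis (real m * (2*pi*(real g - real a)/N))"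
      by (rule arg_cong[where f=cis]) (simp add: algebra_simps diff_divide_distrib)
    also have "\<dots> = x ^ m" by (simp add: x_def Complex.DeMoivre)
    finally show ?thesis .
  qed
  show ?thesis
  proof (cases "g = a")
    case True
    show ?thesis by (simp only: eq) (simp add: x_def True)
  next
    case False
    have N0: "N > 0" using assms by simp
    have xN: "x ^ N = 1"
      using N0 by (simp add: x_def Complex.DeMoivre)
    have "x \<noteq> 1"
    proof
      assume "x = 1"
      then have "cos (2*pi*(real g - real a)/N) = 1" unfolding x_def
        by (metis cis.sel(1) one_complex.sel(1))
      then obtain n :: int where n: "2*pi*(real g - real a)/N = real_of_int n * 2 * pi"
        using cos_one_2pi_int by blast
      then have h0: "2*pi*(real g - real a) = real_of_int n * 2 * pi * N" using N0 by (simp add: divide_eq_eq)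
      then have h: "(2*pi) * (real g - real a) = (2*pi) * (real_of_int n * N)" by (simp only: ac_simps)
      then have "real g - real a = n * N" by (subst (asm) mult_cancel_left) simp
      then have "int g - int a = n * int N" by (metis of_int_eq_iff of_int_diff of_int_mult of_int_of_nat_eq)
      moreover have "\<bar>int g - int a\<bar> < int N" using assms by simp
      ultimately have "\<bar>n\<bar> * int N < 1 * int N" by (simp add: abs_mult)
      then have "\<bar>n\<bar> < 1" using N0 by (simp only: mult_less_cancel_right)
      then have "n = 0" by simp
      then show False using \<open>int g - int a = n * int N\<close> False by simp
    qed
    then show ?thesis using False by (simp add: eq geometric_sum xN)
  qed
qed


definition mpolyC :: "nat \<Rightarrow> (('n::finite \<Rightarrow> nat) \<Rightarrow> real) \<Rightarrow> ('n \<Rightarrow> complex) \<Rightarrow> complex" where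
  "mpolyC d \<beta> z = (\<Sum>\<gamma>\<in>multi_indices d. complex_of_real (\<beta> \<gamma>) * (\<Prod>i\<in>UNIV. z i ^ \<gamma> i))"

lemma mi_le: "\<gamma> \<in> multi_indices d \<Longrightarrow> \<gamma> i \<le> d"
  unfolding multi_indices_def
  by (metis (no_types, lifting) finite_class.finite_UNIV iso_tuple_UNIV_I mem_Collect_eq member_le_sum order_trans zero_le)

lemma finite_mi: "finite (multi_indices d :: ('n::finite \<Rightarrow> nat) set)"
proof (rule finite_subset)
  show "multi_indices d \<subseteq> PiE UNIV (\<lambda>_. {..d})"
    using mi_le by (auto simp: PiE_iff)
  show "finite (PiE (UNIV::'n set) (\<lambda>_. {..d}))" by (rule finite_PiE) auto
qed

lemma zero_mi: "(\<lambda>_. 0) \<in> multi_indices d"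
  by (simp add: multi_indices_def)

lemma torus:
  fixes \<alpha> :: "'n::finite \<Rightarrow> nat" and \<beta> :: "('n \<Rightarrow> nat) \<Rightarrow> real"
  assumes "\<alpha> \<in> multi_indices d"
  shows "(\<Sum>k\<in>PiE UNIV (\<lambda>_. {..<Suc d}). mpolyC d \<beta> (\<lambda>i. (cis (2*pi/Suc d))^(k i)) * (\<Prod>i\<in>UNIV. (cnj (cis (2*pi/Suc d)))^(k i * \<alpha> i)))
     = of_real (\<beta> \<alpha>) * of_nat (Suc d) ^ CARD('n)"
proof -
  define N where "N = Suc d"
  define \<omega> where "\<omega> = cis (2*pi/N)"
  define K where "K = PiE (UNIV::'n set) (\<lambda>_. {..<N})"
  have fK: "finite K" unfolding K_def by (rule finite_PiE) auto
  have "(\<Sum>k\<in>K. mpolyC d \<beta> (\<lambda>i. \<omega>^(k i)) * (\<Prod>i\<in>UNIV. (cnj \<omega>)^(k i * \<alpha> i)))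
      = (\<Sum>k\<in>K. \<Sum>\<gamma>\<in>multi_indices d. complex_of_real (\<beta> \<gamma>) * (\<Prod>i\<in>UNIV. \<omega>^(k i * \<gamma> i) * (cnj \<omega>)^(k i * \<alpha> i)))"
    by (simp add: mpolyC_def sum_distrib_right prod.distrib power_mult mult.assoc)
  also have "\<dots> = (\<Sum>\<gamma>\<in>multi_indices d. complex_of_real (\<beta> \<gamma>) * (\<Sum>k\<in>K. \<Prod>i\<in>UNIV. \<omega>^(k i * \<gamma> i) * (cnj \<omega>)^(k i * \<alpha> i)))"
    by (subst sum.swap) (simp add: sum_distrib_left)
  also have "\<dots> = (\<Sum>\<gamma>\<in>multi_indices d. complex_of_real (\<beta> \<gamma>) * (\<Prod>i\<in>UNIV. \<Sum>m<N. \<omega>^(m * \<gamma> i) * (cnj \<omega>)^(m * \<alpha> i)))"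
    unfolding K_def by (subst prod_sum_PiE) auto
  also have "\<dots> = (\<Sum>\<gamma>\<in>multi_indices d. complex_of_real (\<beta> \<gamma>) * (\<Prod>i\<in>UNIV. if \<gamma> i = \<alpha> i then of_nat N else 0))"
  proof (rule sum.cong[OF refl])
    fix \<gamma> :: "'n \<Rightarrow> nat" assume g: "\<gamma> \<in> multi_indices d"
    have "(\<Sum>m<N. \<omega>^(m * \<gamma> i) * (cnj \<omega>)^(m * \<alpha> i)) = (if \<gamma> i = \<alpha> i then of_nat N else 0)" for i
      unfolding \<omega>_def using mi_le[OF g] mi_le[OF assms] N_def
      by (intro roots_orth) (auto simp: less_Suc_eq_le)
    then show "complex_of_real (\<beta> \<gamma>) * (\<Prod>i\<in>UNIV. \<Sum>m<N. \<omega>^(m * \<gamma> i) * (cnj \<omega>)^(m * \<alpha> i))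
       = complex_of_real (\<beta> \<gamma>) * (\<Prod>i\<in>UNIV. if \<gamma> i = \<alpha> i then of_nat N else 0)" by simp
  qed
  also have "\<dots> = (\<Sum>\<gamma>\<in>multi_indices d. if \<gamma> = \<alpha> then complex_of_real (\<beta> \<gamma>) * of_nat N ^ CARD('n) else 0)"
  proof (rule sum.cong[OF refl])
    fix \<gamma> :: "'n \<Rightarrow> nat"
    show "complex_of_real (\<beta> \<gamma>) * (\<Prod>i\<in>UNIV. if \<gamma> i = \<alpha> i then of_nat N else 0)
      = (if \<gamma> = \<alpha> then complex_of_real (\<beta> \<gamma>) * of_nat N ^ CARD('n) else 0)"
    proof (cases "\<gamma> = \<alpha>")
      case True then show ?thesis by simp
    next
      case False
      then obtain j where "\<gamma> j \<noteq> \<alpha> j" by auto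
      then have "(\<Prod>i\<in>UNIV. if \<gamma> i = \<alpha> i then (of_nat N::complex) else 0) = 0"
        by (intro prod_zero) auto
      then show ?thesis using False by simp
    qed
  qed
  also have "\<dots> = complex_of_real (\<beta> \<alpha>) * of_nat N ^ CARD('n)"
    by (subst sum.delta[OF finite_mi]) (simp add: assms)
  finally show ?thesis unfolding K_def N_def \<omega>_def .
qed


lemma real_eval: "mpolyC d \<beta> (\<lambda>i. complex_of_real (x $ i)) = complex_of_real (mpoly_eval d \<beta> x)"
  by (simp add: mpolyC_def mpoly_eval_def)

lemma eval_bound:
  assumes "x \<in> unit_cube"
  shows "\<bar>mpoly_eval d \<beta> x\<bar> \<le> (\<Sum>\<gamma>\<in>multi_indices d. \<bar>\<beta> \<gamma>\<bar>)"
proof -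
  have "\<bar>mpoly_eval d \<beta> x\<bar> \<le> (\<Sum>\<gamma>\<in>multi_indices d. \<bar>\<beta> \<gamma> * (\<Prod>i\<in>UNIV. (x $ i) ^ \<gamma> i)\<bar>)"
    unfolding mpoly_eval_def by (rule sum_abs)
  also have "\<dots> \<le> (\<Sum>\<gamma>\<in>multi_indices d. \<bar>\<beta> \<gamma>\<bar>)"
  proof (rule sum_mono)
    fix \<gamma> :: "'a \<Rightarrow> nat"
    have "\<bar>\<Prod>i\<in>UNIV. (x $ i) ^ \<gamma> i\<bar> \<le> 1"
      unfolding abs_prod power_abs
      using assms unfolding unit_cube_def
      by (intro prod_le_1) (auto intro!: power_le_one simp: abs_le_iff)
    then show "\<bar>\<beta> \<gamma> * (\<Prod>i\<in>UNIV. (x $ i) ^ \<gamma> i)\<bar> \<le> \<bar>\<beta> \<gamma>\<bar>"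
      by (simp add: abs_mult mult_left_le)
  qed
  finally show ?thesis .
qed

lemma sup_bound:
  assumes "x \<in> unit_cube"
  shows "\<bar>mpoly_eval d \<beta> x\<bar> \<le> cube_sup_norm d \<beta>"
  unfolding cube_sup_norm_def
  by (rule cSUP_upper[OF assms]) (rule bdd_aboveI2[OF eval_bound])

lemma zero_cube: "0 \<in> unit_cube"
  by (simp add: unit_cube_def)

lemma M_nonneg: "0 \<le> cube_sup_norm d \<beta>"
  using sup_bound[OF zero_cube, of d \<beta>] by linarith

lemma polydisc:
  fixes z :: "'n::finite \<Rightarrow> complex"
  assumes z: "\<And>i. norm (z i) \<le> 1"
  shows "norm (mpolyC d \<beta> z) \<le> 3^d * cube_sup_norm d \<beta>"
proof -
  define M where "M = cube_sup_norm d \<beta>"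
  define \<eta> where "\<eta> i = Complex (3/5 * Re (z i)) (-(3/4) * Im (z i))" for i
  define G where "G w = (\<Sum>\<gamma>\<in>multi_indices d. complex_of_real (\<beta> \<gamma>) *
       (w^(d - mi_abs \<gamma>) * (\<Prod>i\<in>UNIV. ((w^2 * \<eta> i + cnj (\<eta> i))/2)^(\<gamma> i))))" for w
  have Geq: "G w = w^d * mpolyC d \<beta> y" if hy: "\<And>i. (w^2 * \<eta> i + cnj (\<eta> i))/2 = w * y i" for w y
  proof -
    have "G w = (\<Sum>\<gamma>\<in>multi_indices d. complex_of_real (\<beta> \<gamma>) *
       (w^(d - mi_abs \<gamma>) * (\<Prod>i\<in>UNIV. (w * y i)^(\<gamma> i))))"
      unfolding G_def using hy by simp
    also have "\<dots> = (\<Sum>\<gamma>\<in>multi_indices d. w^d * (complex_of_real (\<beta> \<gamma>) * (\<Prod>i\<in>UNIV. (y i)^(\<gamma> i))))"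
    proof (rule sum.cong[OF refl])
      fix \<gamma> :: "'n \<Rightarrow> nat" assume g: "\<gamma> \<in> multi_indices d"
      have le: "mi_abs \<gamma> \<le> d" using g by (simp add: multi_indices_def mi_abs_def)
      have "(\<Prod>i\<in>UNIV. (w * y i)^(\<gamma> i)) = w ^ mi_abs \<gamma> * (\<Prod>i\<in>UNIV. (y i)^(\<gamma> i))"
        by (simp add: power_mult_distrib prod.distrib mi_abs_def power_sum)
      moreover have "w^(d - mi_abs \<gamma>) * w ^ mi_abs \<gamma> = w^d"
        using le by (simp flip: power_add)
      ultimately show "complex_of_real (\<beta> \<gamma>) * (w^(d - mi_abs \<gamma>) * (\<Prod>i\<in>UNIV. (w * y i)^(\<gamma> i)))
          = w^d * (complex_of_real (\<beta> \<gamma>) * (\<Prod>i\<in>UNIV. (y i)^(\<gamma> i)))"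
        by (metis (no_types, lifting) mult.assoc mult.left_commute)
    qed
    also have "\<dots> = w^d * mpolyC d \<beta> y"
      by (simp add: mpolyC_def sum_distrib_left)
    finally show ?thesis .
  qed
  have eta_le: "cmod (\<eta> i) \<le> 1" for i
  proof -
    have a: "0 \<le> Re (z i) * Re (z i)" "0 \<le> Im (z i) * Im (z i)" by simp_all
    have "cmod (\<eta> i) \<le> cmod (z i)"
      unfolding \<eta>_def cmod_def
    proof (intro real_sqrt_le_mono)
      show "(Re (Complex (3 / 5 * Re (z i)) (- (3 / 4) * Im (z i))))\<^sup>2 +
        (Im (Complex (3 / 5 * Re (z i)) (- (3 / 4) * Im (z i))))\<^sup>2
        \<le> (Re (z i))\<^sup>2 + (Im (z i))\<^sup>2"
      proof -
        have e1: "(Re (Complex (3 / 5 * Re (z i)) (- (3 / 4) * Im (z i))))\<^sup>2 +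
          (Im (Complex (3 / 5 * Re (z i)) (- (3 / 4) * Im (z i))))\<^sup>2
          = 9/25 * (Re (z i) * Re (z i)) + 9/16 * (Im (z i) * Im (z i))"
          by (simp add: power2_eq_square)
        have e2: "(Re (z i))\<^sup>2 + (Im (z i))\<^sup>2 = Re (z i) * Re (z i) + Im (z i) * Im (z i)"
          by (simp add: power2_eq_square)
        show ?thesis unfolding e1 e2 using a by linarith
      qed
    qed
    then show ?thesis using z[of i] by linarith
  qed
  have hol: "G holomorphic_on interior (cball 0 1)"
    unfolding G_def by (intro holomorphic_intros) simp
  have cont: "continuous_on (closure (cball 0 1)) G"
    unfolding G_def by (intro continuous_intros) simp
  have front: "norm (G w) \<le> M" if w: "w \<in> frontier (cball 0 1)" for w
  proof -
    have w1: "cmod w = 1" using w by simp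
    define x :: "real^'n" where "x = (\<chi> i. Re (w * \<eta> i))"
    have hy: "(w^2 * \<eta> i + cnj (\<eta> i))/2 = w * complex_of_real (x $ i)" for i
    proof -
      have "w * cnj w = 1"
        using w1 by (metis complex_norm_square mult.right_neutral norm_one of_real_1 power_one)
      then have "w * cnj (w * \<eta> i) = cnj (\<eta> i)" by (simp add: mult.assoc[symmetric])
      moreover have "complex_of_real (x $ i) = (w * \<eta> i + cnj (w * \<eta> i))/2"
      proof -
        have "complex_of_real (Re u) = (u + cnj u)/2" for u by (simp add: complex_eq_iff)
        then show ?thesis unfolding x_def vec_lambda_beta .
      qed
      ultimately show ?thesis by (simp add: algebra_simps power2_eq_square)
    qed
    have xc: "x \<in> unit_cube"
    proof -
      have "\<bar>x $ i\<bar> \<le> 1" for i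
      proof -
        have "\<bar>x $ i\<bar> \<le> cmod (w * \<eta> i)" unfolding x_def vec_lambda_beta by (rule abs_Re_le_cmod)
        also have "\<dots> = cmod (\<eta> i)" by (simp add: norm_mult w1)
        finally show ?thesis using eta_le[of i] by linarith
      qed
      then show ?thesis unfolding unit_cube_def by (auto simp: abs_le_iff)
    qed
    have "G w = w^d * complex_of_real (mpoly_eval d \<beta> x)"
      using Geq[of w "\<lambda>i. complex_of_real (x $ i)", OF hy] by (simp add: real_eval)
    then have "norm (G w) = \<bar>mpoly_eval d \<beta> x\<bar>" by (simp add: norm_mult norm_power w1)
    then show ?thesis using sup_bound[OF xc] M_def by simp
  qed
  have "norm (G (1/3)) \<le> M"
    by (rule maximum_modulus_frontier[OF hol cont _ front]) auto
  moreover have "G (1/3) = (1/3)^d * mpolyC d \<beta> z"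
  proof (rule Geq)
    fix i
    show "((1/3)^2 * \<eta> i + cnj (\<eta> i))/2 = (1/3) * z i"
      unfolding \<eta>_def by (simp add: complex_eq_iff power2_eq_square)
  qed
  ultimately have "(1/3)^d * norm (mpolyC d \<beta> z) \<le> M"
    by (simp add: norm_mult norm_power)
  then show ?thesis unfolding M_def by (simp add: field_simps)
qed


lemma coef_bound:
  fixes \<beta> :: "('n::finite \<Rightarrow> nat) \<Rightarrow> real"
  assumes a: "\<alpha> \<in> multi_indices d"
  shows "\<bar>\<beta> \<alpha>\<bar> \<le> 3^d * cube_sup_norm d \<beta>"
proof -
  define M where "M = cube_sup_norm d \<beta>"
  define N where "N = Suc d"
  define \<omega> where "\<omega> = cis (2*pi/Suc d)"
  define K where "K = PiE (UNIV::'n set) (\<lambda>_. {..<Suc d})"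
  have fK: "finite K" unfolding K_def by (rule finite_PiE) auto
  have cK: "card K = N ^ CARD('n)" unfolding K_def N_def by (simp add: card_PiE)
  have eq: "(\<Sum>k\<in>K. mpolyC d \<beta> (\<lambda>i. \<omega>^(k i)) * (\<Prod>i\<in>UNIV. (cnj \<omega>)^(k i * \<alpha> i)))
     = of_real (\<beta> \<alpha>) * of_nat N ^ CARD('n)"
    unfolding K_def \<omega>_def N_def by (rule torus[OF a])
  have "norm (\<Sum>k\<in>K. mpolyC d \<beta> (\<lambda>i. \<omega>^(k i)) * (\<Prod>i\<in>UNIV. (cnj \<omega>)^(k i * \<alpha> i)))
      \<le> (\<Sum>k\<in>K. norm (mpolyC d \<beta> (\<lambda>i. \<omega>^(k i)) * (\<Prod>i\<in>UNIV. (cnj \<omega>)^(k i * \<alpha> i))))"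
    by (rule norm_sum)
  also have "\<dots> \<le> (\<Sum>k\<in>K. 3^d * M)"
  proof (rule sum_mono)
    fix k :: "'n \<Rightarrow> nat"
    have n1: "norm \<omega> = 1" unfolding \<omega>_def by simp
    have "norm (mpolyC d \<beta> (\<lambda>i. \<omega>^(k i))) \<le> 3^d * M"
      unfolding M_def by (rule polydisc) (simp add: norm_power n1)
    moreover have "norm (\<Prod>i\<in>UNIV. (cnj \<omega>)^(k i * \<alpha> i)) = 1"
      by (simp only: prod_norm[symmetric] norm_power complex_mod_cnj n1) simp
    ultimately show "norm (mpolyC d \<beta> (\<lambda>i. \<omega>^(k i)) * (\<Prod>i\<in>UNIV. (cnj \<omega>)^(k i * \<alpha> i))) \<le> 3^d * M"
      by (simp add: norm_mult)
  qed
  also have "\<dots> = real N ^ CARD('n) * (3^d * M)" using cK by simp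
  finally have "\<bar>\<beta> \<alpha>\<bar> * real N ^ CARD('n) \<le> real N ^ CARD('n) * (3^d * M)"
    unfolding eq by (simp add: norm_mult norm_power)
  moreover have "0 < real N ^ CARD('n)" unfolding N_def by simp
  ultimately show ?thesis unfolding M_def by (simp add: mult.commute)
qed

theorem lemma1:
  fixes d :: nat and \<beta> :: "('n::finite \<Rightarrow> nat) \<Rightarrow> real"
  shows "coeff_norm d \<beta> \<le> 3 ^ (d + 1) * cube_sup_norm d \<beta>"
  unfolding coeff_norm_def
proof (subst Max_le_iff)
  show "finite ((\<lambda>\<alpha>. \<bar>\<beta> \<alpha>\<bar> / multinomial_coeff \<alpha>) ` multi_indices d)"
    by (rule finite_imageI[OF finite_mi])
  show "(\<lambda>\<alpha>. \<bar>\<beta> \<alpha>\<bar> / multinomial_coeff \<alpha>) ` multi_indices d \<noteq> {}"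
    using zero_mi by auto
  show "\<forall>a\<in>(\<lambda>\<alpha>. \<bar>\<beta> \<alpha>\<bar> / multinomial_coeff \<alpha>) ` multi_indices d. a \<le> 3 ^ (d + 1) * cube_sup_norm d \<beta>"
  proof
    fix a assume "a \<in> (\<lambda>\<alpha>. \<bar>\<beta> \<alpha>\<bar> / multinomial_coeff \<alpha>) ` multi_indices d"
    then obtain \<alpha> where al: "\<alpha> \<in> multi_indices d" and aeq: "a = \<bar>\<beta> \<alpha>\<bar> / multinomial_coeff \<alpha>" by auto
    have m1: "1 \<le> multinomial_coeff \<alpha>" by (rule multinomial_ge1)
    have "a \<le> \<bar>\<beta> \<alpha>\<bar>" unfolding aeq using m1
      by (simp add: divide_le_eq mult_le_cancel_left1 order_trans[OF _ m1] mult_left_le)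
    also have "\<dots> \<le> 3^d * cube_sup_norm d \<beta>" by (rule coef_bound[OF al])
    also have "\<dots> \<le> 3^(d+1) * cube_sup_norm d \<beta>"
      using M_nonneg[of d \<beta>] by (intro mult_right_mono) auto
    finally show "a \<le> 3 ^ (d + 1) * cube_sup_norm d \<beta>" .
  qed
qed

end
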